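(* Let $\Phi\in\mathbb{R}^{z\times m}$ be a signalling scheme, $q$ a prior, and $\zeta^u$ a signal with $\sum_\ell\phi^u_\ell q_\ell>0$. For a flow $f\in\mathcal{H}$ let $S_u(f)$ be the set of $\psi\in\Delta_1^m$ such that $$\sum_{s\in[m]}\phi^u_s\big(C^{\theta_s}_p(f)-C^{\theta_s}_r(f)\big)\psi_s=0\ \text{ for all } p,r\in\mathcal{P} \text{ with } f_p>0,f_r>0,$$ $$\sum_{s\in[m]}\phi^u_s\big(C^{\theta_s}_p(f)-C^{\theta_s}_r(f)\big)\psi_s\le0\ \text{ for all } p,r\in\mathcal{P} \text{ with } f_p>0,f_r=0.$$ Then for any two $\widetilde q^{\zeta^u}$-WE $\widetilde f,\widehat f\in\mathcal{W}^{\widetilde q^{\zeta^u}}$ we have $S_u(\widetilde f)=S_u(\widehat f)$.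
   Context: Let $\mathcal{G}=(\mathcal{V},\mathcal{E})$ be a finite directed graph with an origin $v_o$ and a destination $v_d$, and let $\mathcal{P}$ be the (finite) set of acyclic directed paths from $v_o$ to $v_d$, $n=|\mathcal{P}|$. The set of feasible path-flows is $\mathcal{H}=\{f\in\mathbb{R}^n_{\ge0}:\sum_{p\in\mathcal{P}}f_p=1\}$. For a path-flow $f$, the flow on edge $e_k$ is $f_{e_k}=\sum_{p\ni e_k}f_p$. There is a finite set of states $\Theta=\{\theta_1,\dots,\theta_m\}$; in each state $\theta_s$ each edge $e_k$ has a known cost function $C^{\theta_s}_{e_k}:\mathbb{R}_{\ge0}\to\mathbb{R}_{\ge0}$ that is continuous and strictly increasing. The cost of path $p$ in state $\theta_s$ is $C^{\theta_s}_p(f)=\sum_{e_k\in p}C^{\theta_s}_{e_k}(f_{e_k})$. For $\varphi\in\Delta_1^m:=\{x\in\mathbb{R}^m_{\ge0}:\sum_i x_i=1\}$ the expected cost of path $p$ is $C^\varphi_p(f)=\sum_{s}\varphi_sC^{\theta_s}_p(f)$. A flow $f\in\mathcal{H}$ is a $\varphi$-based Wardrop equilibrium ($\varphi$-WE) if for all $p$ with $f_p>0$ we have $C^\varphi_p(f)\le C^\varphi_r(f)$ for all $r\in\mathcal{P}$; $\mathcal{W}^\varphi$ denotes the set of $\varphi$-WE. A prior is a $q\in\Delta_1^m$ with $q_s>0$ for all $s$. A (public) signalling scheme with signals $\zeta^1,\dots,\zeta^z$ is a column-stochastic matrix $\Phi=(\phi^u_s)\in\mathbb{R}^{z\times m}_{\ge0}$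 (each column sums to $1$), where $\phi^u_s$ is the probability of sending $\zeta^u$ in state $\theta_s$. The posterior after $\zeta^u$ is $\widetilde q^{\zeta^u}_s=\phi^u_sq_s/\sum_{\ell}\phi^u_\ell q_\ell$. *)

theory Defs
  imports "HOL-Analysis.Analysis"
begin

text \<open>Directed (multi)graph: vertex set V, edge set E, each edge e has tail (tl_e e)
  and head (hd_e e).\<close>

definition odpath :: "'e set \<Rightarrow> ('e \<Rightarrow> 'v) \<Rightarrow> ('e \<Rightarrow> 'v) \<Rightarrow> 'v \<Rightarrow> 'v \<Rightarrow> 'e list \<Rightarrow> bool" where
  "odpath E tl_e hd_e vo vd es \<longleftrightarrow>
     set es \<subseteq> E \<and>
     (\<forall>i < length es. tl_e (es ! i) = (vo # map hd_e es) ! i) \<and>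
     last (vo # map hd_e es) = vd \<and>
     distinct (vo # map hd_e es)"

definition paths :: "'e set \<Rightarrow> ('e \<Rightarrow> 'v) \<Rightarrow> ('e \<Rightarrow> 'v) \<Rightarrow> 'v \<Rightarrow> 'v \<Rightarrow> 'e list set" where
  "paths E tl_e hd_e vo vd = {es. odpath E tl_e hd_e vo vd es}"

definition feasible :: "'e list set \<Rightarrow> ('e list \<Rightarrow> real) set" where
  "feasible P = {f. (\<forall>p\<in>P. f p \<ge> 0) \<and> (\<Sum>p\<in>P. f p) = 1}"

definition edge_flow :: "'e list set \<Rightarrow> ('e list \<Rightarrow> real) \<Rightarrow> 'e \<Rightarrow> real" where
  "edge_flow P f e = (\<Sum>p\<in>{p\<in>P. e \<in> set p}. f p)"

text \<open>Cost of path p in state s: C s e is the cost function of edge e in state s.\<close>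
definition path_cost :: "(nat \<Rightarrow> 'e \<Rightarrow> real \<Rightarrow> real) \<Rightarrow> 'e list set \<Rightarrow> nat
     \<Rightarrow> ('e list \<Rightarrow> real) \<Rightarrow> 'e list \<Rightarrow> real" where
  "path_cost C P s f p = (\<Sum>e\<in>set p. C s e (edge_flow P f e))"

definition exp_cost :: "nat \<Rightarrow> (nat \<Rightarrow> 'e \<Rightarrow> real \<Rightarrow> real) \<Rightarrow> 'e list set \<Rightarrow> (nat \<Rightarrow> real)
     \<Rightarrow> ('e list \<Rightarrow> real) \<Rightarrow> 'e list \<Rightarrow> real" where
  "exp_cost m C P \<phi> f p = (\<Sum>s<m. \<phi> s * path_cost C P s f p)"

definition prob_simplex :: "nat \<Rightarrow> (nat \<Rightarrow> real) set" where
  "prob_simplex m = {x. (\<forall>i<m. x i \<ge> 0) \<and> (\<Sum>i<m. x i) = 1}"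

definition wardrop :: "nat \<Rightarrow> (nat \<Rightarrow> 'e \<Rightarrow> real \<Rightarrow> real) \<Rightarrow> 'e list set \<Rightarrow> (nat \<Rightarrow> real)
     \<Rightarrow> ('e list \<Rightarrow> real) set" where
  "wardrop m C P \<phi> = {f \<in> feasible P.
      \<forall>p\<in>P. f p > 0 \<longrightarrow> (\<forall>r\<in>P. exp_cost m C P \<phi> f p \<le> exp_cost m C P \<phi> f r)}"

definition posterior :: "nat \<Rightarrow> (nat \<Rightarrow> nat \<Rightarrow> real) \<Rightarrow> (nat \<Rightarrow> real) \<Rightarrow> nat \<Rightarrow> nat \<Rightarrow> real" where
  "posterior m \<Phi> q u s = \<Phi> u s * q s / (\<Sum>l<m. \<Phi> u l * q l)"

definition S_set :: "nat \<Rightarrow> (nat \<Rightarrow> 'e \<Rightarrow> real \<Rightarrow> real) \<Rightarrow> 'e list set \<Rightarrow> (nat \<Rightarrow> nat \<Rightarrow> real)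
     \<Rightarrow> nat \<Rightarrow> ('e list \<Rightarrow> real) \<Rightarrow> (nat \<Rightarrow> real) set" where
  "S_set m C P \<Phi> u f = {\<psi> \<in> prob_simplex m.
     (\<forall>p\<in>P. \<forall>r\<in>P. f p > 0 \<and> f r > 0 \<longrightarrow>
        (\<Sum>s<m. \<Phi> u s * (path_cost C P s f p - path_cost C P s f r) * \<psi> s) = 0) \<and>
     (\<forall>p\<in>P. \<forall>r\<in>P. f p > 0 \<and> f r = 0 \<longrightarrow>
        (\<Sum>s<m. \<Phi> u s * (path_cost C P s f p - path_cost C P s f r) * \<psi> s) \<le> 0)}"

end

theory Submission
  imports Defs
begin

lemma flow_swap:
  assumes "finite P" "finite E" "\<forall>p\<in>P. set p \<subseteq> E"
  shows "(\<Sum>p\<in>P. (\<Sum>e\<in>set p. a e) * g p) = (\<Sum>e\<in>E. a e * edge_flow P g e)"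
proof -
  have "(\<Sum>e\<in>E. a e * edge_flow P g e) = (\<Sum>e\<in>E. \<Sum>p\<in>P. if e \<in> set p then a e * g p else 0)"
  proof (rule sum.cong[OF refl])
    fix e assume "e \<in> E"
    have "edge_flow P g e = (\<Sum>p\<in>P. if e \<in> set p then g p else 0)"
      unfolding edge_flow_def by (rule sum.inter_filter[OF assms(1)])
    then show "a e * edge_flow P g e = (\<Sum>p\<in>P. if e \<in> set p then a e * g p else 0)"
      by (simp add: sum_distrib_left if_distrib cong: if_cong)
  qed
  also have "\<dots> = (\<Sum>p\<in>P. \<Sum>e\<in>E. if e \<in> set p then a e * g p else 0)"
    by (rule sum.swap)
  also have "\<dots> = (\<Sum>p\<in>P. (\<Sum>e\<in>set p. a e) * g p)"
  proof (intro sum.cong refl)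
    fix p assume "p \<in> P"
    then have "E \<inter> set p = set p" using assms(3) by auto
    then show "(\<Sum>e\<in>E. if e \<in> set p then a e * g p else 0) = (\<Sum>e\<in>set p. a e) * g p"
      using assms(2) by (simp add: sum.If_cases sum_distrib_right Int_def)
  qed
  finally show ?thesis by simp
qed

lemma we_min:
  assumes "finite P" "f \<in> feasible P" "\<forall>p\<in>P. f p > 0 \<longrightarrow> (\<forall>r\<in>P. k p \<le> k r)"
  shows "\<exists>\<mu>. (\<forall>r\<in>P. \<mu> \<le> k r) \<and> (\<Sum>p\<in>P. k p * f p) = \<mu>"
proof -
  have f0: "\<forall>p\<in>P. f p \<ge> 0" and f1: "(\<Sum>p\<in>P. f p) = 1" using assms(2) by (auto simp: feasible_def)
  obtain p0 where p0: "p0 \<in> P" "f p0 > 0"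
  proof (rule ccontr)
    assume "\<not> thesis"
    then have "\<forall>p\<in>P. f p \<le> 0" using that by force
    then have "(\<Sum>p\<in>P. f p) \<le> 0" by (simp add: sum_nonpos)
    with f1 show False by simp
  qed
  have "(\<Sum>p\<in>P. k p * f p) = (\<Sum>p\<in>P. k p0 * f p)"
  proof (intro sum.cong refl)
    fix p assume p: "p \<in> P"
    show "k p * f p = k p0 * f p"
    proof (cases "f p > 0")
      case True
      then have "k p = k p0" using assms(3) p p0 by (meson order_antisym)
      then show ?thesis by simp
    next
      case False
      then have "f p = 0" using f0 p by force
      then show ?thesis by simp
    qed
  qed
  also have "\<dots> = k p0" by (simp add: sum_distrib_left[symmetric] f1)
  finally show ?thesis using assms(3) p0 by blast
qed

lemma we_lower:
  assumes "finite P" "g \<in> feasible P" "\<forall>r\<in>P. \<mu> \<le> k r"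
  shows "\<mu> \<le> (\<Sum>p\<in>P. k p * g p)"
proof -
  have g0: "\<forall>p\<in>P. g p \<ge> 0" and g1: "(\<Sum>p\<in>P. g p) = 1" using assms(2) by (auto simp: feasible_def)
  have "\<mu> = (\<Sum>p\<in>P. \<mu> * g p)" by (simp add: sum_distrib_left[symmetric] g1)
  also have "\<dots> \<le> (\<Sum>p\<in>P. k p * g p)"
    by (intro sum_mono mult_right_mono) (use assms(3) g0 in auto)
  finally show ?thesis .
qed

lemma we_transfer:
  assumes "finite P" "g \<in> feasible P" "\<forall>r\<in>P. \<mu> \<le> k r" "(\<Sum>p\<in>P. k p * g p) = \<mu>"
  shows "\<forall>p\<in>P. g p > 0 \<longrightarrow> (\<forall>r\<in>P. k p \<le> k r)"
proof (intro ballI impI)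
  fix p r assume p: "p \<in> P" "g p > 0" and r: "r \<in> P"
  have g0: "\<forall>p\<in>P. g p \<ge> 0" and g1: "(\<Sum>p\<in>P. g p) = 1" using assms(2) by (auto simp: feasible_def)
  have "(\<Sum>p\<in>P. g p * (k p - \<mu>)) = (\<Sum>p\<in>P. k p * g p) - \<mu> * (\<Sum>p\<in>P. g p)"
    by (simp add: sum_subtractf sum_distrib_left algebra_simps)
  also have "\<dots> = 0" using assms(4) g1 by simp
  finally have s0: "(\<Sum>p\<in>P. g p * (k p - \<mu>)) = 0" .
  have "\<forall>p\<in>P. g p * (k p - \<mu>) = 0"
    using sum_nonneg_eq_0_iff[OF assms(1), of "\<lambda>p. g p * (k p - \<mu>)"] s0 g0 assms(3) by auto
  then have "k p = \<mu>" using p by auto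
  then show "k p \<le> k r" using assms(3) r by simp
qed

lemma edge_unique:
  fixes c :: "'e \<Rightarrow> real \<Rightarrow> real"
  assumes P: "finite P" and E: "finite E" and PE: "\<forall>p\<in>P. set p \<subseteq> E"
    and mono: "\<forall>e\<in>E. strict_mono_on {0..} (c e)"
    and ft: "ft \<in> feasible P" and fh: "fh \<in> feasible P"
    and wt: "\<forall>p\<in>P. ft p > 0 \<longrightarrow> (\<forall>r\<in>P. (\<Sum>e\<in>set p. c e (edge_flow P ft e)) \<le> (\<Sum>e\<in>set r. c e (edge_flow P ft e)))"
    and wh: "\<forall>p\<in>P. fh p > 0 \<longrightarrow> (\<forall>r\<in>P. (\<Sum>e\<in>set p. c e (edge_flow P fh e)) \<le> (\<Sum>e\<in>set r. c e (edge_flow P fh e)))"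
  shows "\<forall>e\<in>E. edge_flow P ft e = edge_flow P fh e"
proof -
  define xt where "xt = edge_flow P ft"
  define xh where "xh = edge_flow P fh"
  have nn: "\<And>f e. f \<in> feasible P \<Longrightarrow> edge_flow P f e \<ge> 0"
    unfolding edge_flow_def feasible_def by (auto intro: sum_nonneg)
  obtain \<mu>t where mt: "\<forall>r\<in>P. \<mu>t \<le> (\<Sum>e\<in>set r. c e (xt e))" "(\<Sum>p\<in>P. (\<Sum>e\<in>set p. c e (xt e)) * ft p) = \<mu>t"
    using we_min[OF P ft wt] unfolding xt_def by blast
  obtain \<mu>h where mh: "\<forall>r\<in>P. \<mu>h \<le> (\<Sum>e\<in>set r. c e (xh e))" "(\<Sum>p\<in>P. (\<Sum>e\<in>set p. c e (xh e)) * fh p) = \<mu>h"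
    using we_min[OF P fh wh] unfolding xh_def by blast
  have i1: "(\<Sum>e\<in>E. c e (xt e) * xt e) \<le> (\<Sum>e\<in>E. c e (xt e) * xh e)"
    using we_lower[OF P fh mt(1)] mt(2) flow_swap[OF P E PE, of "\<lambda>e. c e (xt e)"] unfolding xt_def xh_def by simp
  have i2: "(\<Sum>e\<in>E. c e (xh e) * xh e) \<le> (\<Sum>e\<in>E. c e (xh e) * xt e)"
    using we_lower[OF P ft mh(1)] mh(2) flow_swap[OF P E PE, of "\<lambda>e. c e (xh e)"] unfolding xt_def xh_def by simp
  have tnn: "\<forall>e\<in>E. (c e (xt e) - c e (xh e)) * (xt e - xh e) \<ge> 0"
  proof
    fix e assume e: "e \<in> E"
    have a: "xt e \<ge> 0" "xh e \<ge> 0" using nn ft fh unfolding xt_def xh_def by auto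
    have sm: "strict_mono_on {0..} (c e)" using mono e by auto
    show "(c e (xt e) - c e (xh e)) * (xt e - xh e) \<ge> 0"
    proof (cases "xt e \<le> xh e")
      case True
      have "c e (xt e) \<le> c e (xh e)"
      proof (cases "xt e = xh e")
        case False
        then have lt: "xt e < xh e" using True by simp
        show ?thesis using strict_mono_onD[OF sm _ _ lt] a by simp
      qed simp
      then show ?thesis using True by (simp add: mult_nonpos_nonpos)
    next
      case False
      then have lt: "xh e < xt e" by simp
      have "c e (xh e) < c e (xt e)" using strict_mono_onD[OF sm _ _ lt] a by simp
      then show ?thesis using False by simp
    qed
  qed
  have "(\<Sum>e\<in>E. (c e (xt e) - c e (xh e)) * (xt e - xh e)) =
     (\<Sum>e\<in>E. (c e (xt e) * xt e - c e (xt e) * xh e) + (c e (xh e) * xh e - c e (xh e) * xt e))"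
    by (intro sum.cong refl) (simp add: algebra_simps)
  also have "\<dots> = ((\<Sum>e\<in>E. c e (xt e) * xt e) - (\<Sum>e\<in>E. c e (xt e) * xh e)) + ((\<Sum>e\<in>E. c e (xh e) * xh e) - (\<Sum>e\<in>E. c e (xh e) * xt e))"
    by (simp only: sum.distrib sum_subtractf)
  finally have "(\<Sum>e\<in>E. (c e (xt e) - c e (xh e)) * (xt e - xh e)) \<le> 0"
    using i1 i2 by linarith
  then have "(\<Sum>e\<in>E. (c e (xt e) - c e (xh e)) * (xt e - xh e)) = 0"
  proof -
    have "0 \<le> (\<Sum>e\<in>E. (c e (xt e) - c e (xh e)) * (xt e - xh e))"
      using tnn by (intro sum_nonneg) auto
    then show ?thesis using \<open>(\<Sum>e\<in>E. (c e (xt e) - c e (xh e)) * (xt e - xh e)) \<le> 0\<close> by linarith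
  qed
  then have z: "\<forall>e\<in>E. (c e (xt e) - c e (xh e)) * (xt e - xh e) = 0"
    using sum_nonneg_eq_0_iff[OF E, of "\<lambda>e. (c e (xt e) - c e (xh e)) * (xt e - xh e)"] tnn by simp
  show ?thesis
  proof
    fix e assume e: "e \<in> E"
    have a: "xt e \<ge> 0" "xh e \<ge> 0" using nn ft fh unfolding xt_def xh_def by auto
    have sm: "strict_mono_on {0..} (c e)" using mono e by auto
    show "edge_flow P ft e = edge_flow P fh e"
    proof (rule ccontr)
      assume ne: "edge_flow P ft e \<noteq> edge_flow P fh e"
      then have "xt e \<noteq> xh e" unfolding xt_def xh_def .
      have "c e (xt e) \<noteq> c e (xh e)"
      proof (cases "xt e < xh e")
        case True
        then show ?thesis using strict_mono_onD[OF sm _ _ True] a by simp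
      next
        case False
        then have lt: "xh e < xt e" using \<open>xt e \<noteq> xh e\<close> by simp
        show ?thesis using strict_mono_onD[OF sm _ _ lt] a by simp
      qed
      moreover have "c e (xt e) = c e (xh e) \<or> xt e = xh e" using z e by simp
      ultimately show False using \<open>xt e \<noteq> xh e\<close> by blast
    qed
  qed
qed

lemma pc_eq:
  assumes PE: "\<forall>p\<in>P. set p \<subseteq> E" and EQ: "\<forall>e\<in>E. edge_flow P ft e = edge_flow P fh e"
    and p: "p \<in> P"
  shows "path_cost C P s ft p = path_cost C P s fh p"
  unfolding path_cost_def
proof (intro sum.cong refl)
  fix x assume "x \<in> set p"
  then have "x \<in> E" using PE p by blast
  then show "C s x (edge_flow P ft x) = C s x (edge_flow P fh x)" using EQ by simp
qed

lemma S_sub: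
  assumes P: "finite P" and E: "finite E" and PE: "\<forall>p\<in>P. set p \<subseteq> E"
    and ft: "ft \<in> feasible P" and fh: "fh \<in> feasible P"
    and EQ: "\<forall>e\<in>E. edge_flow P ft e = edge_flow P fh e"
  shows "S_set m C P \<Phi> u ft \<subseteq> S_set m C P \<Phi> u fh"
proof
  fix \<psi> assume psi: "\<psi> \<in> S_set m C P \<Phi> u ft"
  define w where "w p = (\<Sum>s<m. \<Phi> u s * path_cost C P s ft p * \<psi> s)" for p
  have dt: "(\<Sum>s<m. \<Phi> u s * (path_cost C P s ft p - path_cost C P s ft r) * \<psi> s) = w p - w r" for p r
    unfolding w_def sum_subtractf[symmetric] by (intro sum.cong refl) (simp add: algebra_simps)
  have dh: "(\<Sum>s<m. \<Phi> u s * (path_cost C P s fh p - path_cost C P s fh r) * \<psi> s) = w p - w r"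
    if "p \<in> P" "r \<in> P" for p r
    using dt[of p r] pc_eq[OF PE EQ that(1)] pc_eq[OF PE EQ that(2)] by simp
  have ft0: "\<forall>p\<in>P. ft p \<ge> 0" and fh0: "\<forall>p\<in>P. fh p \<ge> 0" using ft fh by (auto simp: feasible_def)
  have wt: "\<forall>p\<in>P. ft p > 0 \<longrightarrow> (\<forall>r\<in>P. w p \<le> w r)"
  proof (intro ballI impI)
    fix p r assume p: "p \<in> P" "ft p > 0" and r: "r \<in> P"
    show "w p \<le> w r"
    proof (cases "ft r > 0")
      case True
      then show ?thesis using psi p r dt[of p r] unfolding S_set_def by auto
    next
      case False
      then have "ft r = 0" using ft0 r by force
      then have "(\<Sum>s<m. \<Phi> u s * (path_cost C P s ft p - path_cost C P s ft r) * \<psi> s) \<le> 0"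
        using psi p r unfolding S_set_def by blast
      then show ?thesis using dt[of p r] by simp
    qed
  qed
  obtain \<mu> where mu: "\<forall>r\<in>P. \<mu> \<le> w r" "(\<Sum>p\<in>P. w p * ft p) = \<mu>"
    using we_min[OF P ft wt] by blast
  define a where "a e = (\<Sum>s<m. \<Phi> u s * C s e (edge_flow P ft e) * \<psi> s)" for e
  have wa: "w p = (\<Sum>e\<in>set p. a e)" for p
    unfolding w_def a_def path_cost_def sum_distrib_left sum_distrib_right
    by (subst sum.swap) simp
  have "(\<Sum>p\<in>P. w p * fh p) = (\<Sum>e\<in>E. a e * edge_flow P fh e)"
    unfolding wa by (rule flow_swap[OF P E PE])
  also have "\<dots> = (\<Sum>e\<in>E. a e * edge_flow P ft e)" using EQ by (intro sum.cong refl) auto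
  also have "\<dots> = (\<Sum>p\<in>P. w p * ft p)"
    unfolding wa by (rule flow_swap[OF P E PE, symmetric])
  finally have "(\<Sum>p\<in>P. w p * fh p) = \<mu>" using mu(2) by simp
  from we_transfer[OF P fh mu(1) this]
  have wh: "\<forall>p\<in>P. fh p > 0 \<longrightarrow> (\<forall>r\<in>P. w p \<le> w r)" .
  show "\<psi> \<in> S_set m C P \<Phi> u fh"
    using psi unfolding S_set_def
  proof (intro CollectI conjI ballI impI)
    show "\<psi> \<in> prob_simplex m" using psi unfolding S_set_def by auto
  next
    fix p r assume p: "p \<in> P" and r: "r \<in> P" and h: "0 < fh p \<and> 0 < fh r"
    then show "(\<Sum>s<m. \<Phi> u s * (path_cost C P s fh p - path_cost C P s fh r) * \<psi> s) = 0"
    proof -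
      have "w p \<le> w r" using wh p r h by blast
      moreover have "w r \<le> w p" using wh p r h by blast
      ultimately show ?thesis using dh[OF p r] by simp
    qed
  next
    fix p r assume p: "p \<in> P" and r: "r \<in> P" and h: "0 < fh p \<and> fh r = 0"
    then show "(\<Sum>s<m. \<Phi> u s * (path_cost C P s fh p - path_cost C P s fh r) * \<psi> s) \<le> 0"
    proof -
      have "w p \<le> w r" using wh p r h by blast
      then show ?thesis using dh[OF p r] by simp
    qed
  qed
qed

theorem corollary1:
  fixes V :: "'v set" and E :: "'e set" and tl_e hd_e :: "'e \<Rightarrow> 'v"
    and vo vd :: 'v and m z u :: nat
    and C :: "nat \<Rightarrow> 'e \<Rightarrow> real \<Rightarrow> real"
    and q :: "nat \<Rightarrow> real" and \<Phi> :: "nat \<Rightarrow> nat \<Rightarrow> real"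
    and ft fh :: "'e list \<Rightarrow> real"
  assumes "finite V" and "finite E"
    and "\<forall>e\<in>E. tl_e e \<in> V \<and> hd_e e \<in> V"
    and "vo \<in> V" and "vd \<in> V"
    and "\<forall>s<m. \<forall>e\<in>E. continuous_on {0..} (C s e)"
    and "\<forall>s<m. \<forall>e\<in>E. strict_mono_on {0..} (C s e)"
    and "\<forall>s<m. \<forall>e\<in>E. \<forall>x\<ge>0. C s e x \<ge> 0"
    and "q \<in> prob_simplex m" and "\<forall>s<m. q s > 0"
    and "\<forall>u'<z. \<forall>s<m. \<Phi> u' s \<ge> 0"
    and "\<forall>s<m. (\<Sum>u'<z. \<Phi> u' s) = 1"
    and "u < z"
    and "(\<Sum>l<m. \<Phi> u l * q l) > 0"
    and "ft \<in> wardrop m C (paths E tl_e hd_e vo vd) (posterior m \<Phi> q u)"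
    and "fh \<in> wardrop m C (paths E tl_e hd_e vo vd) (posterior m \<Phi> q u)"
  shows "S_set m C (paths E tl_e hd_e vo vd) \<Phi> u ft = S_set m C (paths E tl_e hd_e vo vd) \<Phi> u fh"
proof -
  define P where "P = paths E tl_e hd_e vo vd"
  define \<phi> where "\<phi> = posterior m \<Phi> q u"
  have ft: "ft \<in> feasible P" and fh: "fh \<in> feasible P"
   and wt0: "\<forall>p\<in>P. ft p > 0 \<longrightarrow> (\<forall>r\<in>P. exp_cost m C P \<phi> ft p \<le> exp_cost m C P \<phi> ft r)"
   and wh0: "\<forall>p\<in>P. fh p > 0 \<longrightarrow> (\<forall>r\<in>P. exp_cost m C P \<phi> fh p \<le> exp_cost m C P \<phi> fh r)"
    using assms(15,16) unfolding P_def \<phi>_def wardrop_def by auto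
  have PF: "finite P"
  proof (rule ccontr)
    assume "infinite P"
    then have "(\<Sum>p\<in>P. ft p) = 0" by simp
    with ft show False by (simp add: feasible_def)
  qed
  have PE: "\<forall>p\<in>P. set p \<subseteq> E" unfolding P_def paths_def odpath_def by auto
  define c where "c e x = (\<Sum>s<m. \<phi> s * C s e x)" for e x
  have ec: "exp_cost m C P \<phi> f p = (\<Sum>e\<in>set p. c e (edge_flow P f e))" for f p
    unfolding exp_cost_def path_cost_def c_def sum_distrib_left
    by (subst sum.swap) simp
  have den: "(\<Sum>l<m. \<Phi> u l * q l) > 0" using assms(14) .
  have phi0: "\<forall>s<m. \<phi> s \<ge> 0"
  proof (intro allI impI)
    fix s assume s: "s < m"
    have "\<Phi> u s \<ge> 0" using assms(11,13) s by blast
    moreover have "q s \<ge> 0" using assms(10) s by (simp add: less_imp_le)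
    ultimately have "\<Phi> u s * q s \<ge> 0" by simp
    then show "\<phi> s \<ge> 0" unfolding \<phi>_def posterior_def using den by simp
  qed
  have phi1: "(\<Sum>s<m. \<phi> s) = 1"
    unfolding \<phi>_def posterior_def using den by (simp add: sum_divide_distrib[symmetric])
  obtain s0 where s0: "s0 < m" "\<phi> s0 > 0"
  proof (rule ccontr)
    assume "\<not> thesis"
    then have "\<forall>s<m. \<phi> s \<le> 0" using that by force
    then have "(\<Sum>s<m. \<phi> s) \<le> 0" by (intro sum_nonpos) auto
    with phi1 show False by simp
  qed
  have mono: "\<forall>e\<in>E. strict_mono_on {0..} (c e)"
  proof
    fix e assume e: "e \<in> E"
    show "strict_mono_on {0..} (c e)"
    proof (rule strict_mono_onI)
      fix x y :: real assume xy: "x \<in> {0..}" "y \<in> {0..}" "x < y"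
      show "c e x < c e y" unfolding c_def
      proof (rule sum_strict_mono_ex1)
        show "finite {..<m}" by simp
        show "\<forall>s\<in>{..<m}. \<phi> s * C s e x \<le> \<phi> s * C s e y"
        proof
          fix s assume s: "s \<in> {..<m}"
          have sm: "strict_mono_on {0..} (C s e)" using assms(7) s e by simp
          have "C s e x < C s e y" by (rule strict_mono_onD[OF sm xy])
          moreover have "\<phi> s \<ge> 0" using phi0 s by simp
          ultimately show "\<phi> s * C s e x \<le> \<phi> s * C s e y" by (simp add: mult_left_mono)
        qed
        have sm: "strict_mono_on {0..} (C s0 e)" using assms(7) s0 e by simp
        have "C s0 e x < C s0 e y" by (rule strict_mono_onD[OF sm xy])
        then have "\<phi> s0 * C s0 e x < \<phi> s0 * C s0 e y" using s0 by simp
        then show "\<exists>s\<in>{..<m}. \<phi> s * C s e x < \<phi> s * C s e y" using s0 by blast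
      qed
    qed
  qed
  have EQ: "\<forall>e\<in>E. edge_flow P ft e = edge_flow P fh e"
    using edge_unique[OF PF assms(2) PE mono ft fh] wt0 wh0 unfolding ec by blast
  have EQ': "\<forall>e\<in>E. edge_flow P fh e = edge_flow P ft e" using EQ by simp
  have "S_set m C P \<Phi> u ft = S_set m C P \<Phi> u fh"
    by (rule subset_antisym[OF S_sub[OF PF assms(2) PE ft fh EQ] S_sub[OF PF assms(2) PE fh ft EQ']])
  then show ?thesis unfolding P_def .
qed

end
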